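(* Let $E$ be a smooth functional on $\mathcal P(\Omega)$ that is $\beta$-strongly convex ($\beta\ge0$) with respect to the Fisher-Rao metric. Let $\rho_t,\rho^*$ be smooth positive probability densities with $\rho_t\ne\rho^*$, $R_t=\sqrt{\rho_t}$, $R^*=\sqrt{\rho^*}$, $H_t=\cos^{-1}\big(\int R_tR^*dx\big)$ and $$T_t(x)=\frac{2H_t}{\sin(H_t)}\,\frac{R^*(x)-R_t(x)\cos(H_t)}{R_t(x)}.$$ Then $$E(\rho^* )\ge E(\rho_t)+\int\Big(\frac{\delta E}{\delta\rho_t}-\mathbb{E}_{\rho_t}\Big[\frac{\delta E}{\delta\rho_t}\Big]\Big)T_t\rho_tdx+\frac\beta2\int T_t^2\rho_tdx.$$
   Context: Fisher-Rao metric: $g_\rho(\sigma_1,\sigma_2)=\int\Phi_1\rho(\Phi_2-\mathbb{E}_\rho[\Phi_2])dx$ where $\sigma_i=\rho(\Phi_i-\mathbb{E}_\rho[\Phi_i])$, and $\mathbb{E}_\rho[\Phi]=\int\Phi\rho dx$. $\beta$-strong convexity means $g_\rho(\mathrm{Hess}E(\rho)\sigma,\sigma)\ge\beta g_\rho(\sigma,\sigma)$ for all $\rho$ and all $\sigma$ with $\int\sigma=0$, with Hessian w.r.t. the Fisher-Rao metric (equivalently $\frac{d^2}{ds^2}E(\gamma(s))\ge\beta g(\dot\gamma,\dot\gamma)$ along Fisher-Rao geodesics). $\frac{\delta E}{\delta\rho}$ is the $L^2$ first variation. *)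

theory Defs
  imports "HOL-Analysis.Analysis"
begin

fun Ck_on :: "nat \<Rightarrow> ('a::euclidean_space) set \<Rightarrow> ('a \<Rightarrow> real) \<Rightarrow> bool" where
  "Ck_on 0 \<Omega> f = continuous_on \<Omega> f"
| "Ck_on (Suc k) \<Omega> f =
     (f differentiable_on \<Omega> \<and> (\<forall>v. Ck_on k \<Omega> (\<lambda>x. frechet_derivative f (at x) v)))"

definition smooth_on :: "('a::euclidean_space) set \<Rightarrow> ('a \<Rightarrow> real) \<Rightarrow> bool" where
  "smooth_on \<Omega> f \<longleftrightarrow> (\<forall>k. Ck_on k \<Omega> f)"

definition smooth_pos_density :: "('a::euclidean_space) set \<Rightarrow> ('a \<Rightarrow> real) \<Rightarrow> bool" where
  "smooth_pos_density \<Omega> \<rho> \<longleftrightarrow>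
     smooth_on \<Omega> \<rho> \<and> (\<forall>x\<in>\<Omega>. \<rho> x > 0) \<and> (\<forall>x. x \<notin> \<Omega> \<longrightarrow> \<rho> x = 0) \<and>
     set_integrable lebesgue \<Omega> \<rho> \<and> (LINT x:\<Omega>|lebesgue. \<rho> x) = 1"

definition fr_angle :: "('a::euclidean_space) set \<Rightarrow> ('a \<Rightarrow> real) \<Rightarrow> ('a \<Rightarrow> real) \<Rightarrow> real" where
  "fr_angle \<Omega> \<rho>0 \<rho>1 = arccos (LINT x:\<Omega>|lebesgue. sqrt (\<rho>0 x) * sqrt (\<rho>1 x))"

text \<open>Square root of the Fisher-Rao geodesic (great circle on the sphere of root densities),
  its s-derivative, the geodesic itself and its velocity, for s in [0,1].\<close>
definition fr_root :: "('a::euclidean_space) set \<Rightarrow> ('a \<Rightarrow> real) \<Rightarrow> ('a \<Rightarrow> real) \<Rightarrow> real \<Rightarrow> 'a \<Rightarrow> real" where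
  "fr_root \<Omega> \<rho>0 \<rho>1 s x = (let H = fr_angle \<Omega> \<rho>0 \<rho>1 in
      (sin ((1 - s) * H) * sqrt (\<rho>0 x) + sin (s * H) * sqrt (\<rho>1 x)) / sin H)"

definition fr_root_dot :: "('a::euclidean_space) set \<Rightarrow> ('a \<Rightarrow> real) \<Rightarrow> ('a \<Rightarrow> real) \<Rightarrow> real \<Rightarrow> 'a \<Rightarrow> real" where
  "fr_root_dot \<Omega> \<rho>0 \<rho>1 s x = (let H = fr_angle \<Omega> \<rho>0 \<rho>1 in
      H * (- cos ((1 - s) * H) * sqrt (\<rho>0 x) + cos (s * H) * sqrt (\<rho>1 x)) / sin H)"

definition fr_geodesic :: "('a::euclidean_space) set \<Rightarrow> ('a \<Rightarrow> real) \<Rightarrow> ('a \<Rightarrow> real) \<Rightarrow> real \<Rightarrow> 'a \<Rightarrow> real" where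
  "fr_geodesic \<Omega> \<rho>0 \<rho>1 s x = (fr_root \<Omega> \<rho>0 \<rho>1 s x)\<^sup>2"

definition fr_velocity :: "('a::euclidean_space) set \<Rightarrow> ('a \<Rightarrow> real) \<Rightarrow> ('a \<Rightarrow> real) \<Rightarrow> real \<Rightarrow> 'a \<Rightarrow> real" where
  "fr_velocity \<Omega> \<rho>0 \<rho>1 s x = 2 * fr_root \<Omega> \<rho>0 \<rho>1 s x * fr_root_dot \<Omega> \<rho>0 \<rho>1 s x"

text \<open>Fisher-Rao metric g_rho(sigma,sigma) = int sigma^2 / rho (= int Phi rho (Phi - E_rho Phi)).\<close>
definition fr_metric :: "('a::euclidean_space) set \<Rightarrow> ('a \<Rightarrow> real) \<Rightarrow> ('a \<Rightarrow> real) \<Rightarrow> ('a \<Rightarrow> real) \<Rightarrow> real" where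
  "fr_metric \<Omega> \<rho> \<sigma>1 \<sigma>2 = (LINT x:\<Omega>|lebesgue. \<sigma>1 x * \<sigma>2 x / \<rho> x)"

end

theory Submission imports Defs begin
lemma dens:
  assumes "smooth_pos_density \<Omega> \<rho>" "open \<Omega>"
  shows "\<forall>x. 0 \<le> \<rho> x" "continuous_on \<Omega> \<rho>" "set_integrable lebesgue \<Omega> \<rho>"
    "(LINT x:\<Omega>|lebesgue. \<rho> x) = 1" "integrable lebesgue \<rho>" "\<rho> \<in> borel_measurable lebesgue"
    "\<forall>x\<in>\<Omega>. \<rho> x > 0" "\<forall>x. x\<notin>\<Omega> \<longrightarrow> \<rho> x = 0"
proof -
  have sm: "smooth_on \<Omega> \<rho>" and pos: "\<forall>x\<in>\<Omega>. \<rho> x > 0" and z: "\<forall>x. x\<notin>\<Omega> \<longrightarrow> \<rho> x = 0"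
    and si: "set_integrable lebesgue \<Omega> \<rho>" and one: "(LINT x:\<Omega>|lebesgue. \<rho> x) = 1"
    using assms(1) unfolding smooth_pos_density_def by auto
  show "\<forall>x. 0 \<le> \<rho> x" using pos z by (metis less_le order_refl)
  show "continuous_on \<Omega> \<rho>" using sm unfolding smooth_on_def by (metis Ck_on.simps(1))
  show "set_integrable lebesgue \<Omega> \<rho>" "(LINT x:\<Omega>|lebesgue. \<rho> x) = 1" "\<forall>x\<in>\<Omega>. \<rho> x > 0" "\<forall>x. x\<notin>\<Omega> \<longrightarrow> \<rho> x = 0"
    using si one pos z by auto
  have eq: "(\<lambda>x. indicator \<Omega> x *\<^sub>R \<rho> x) = \<rho>"
    using z by (intro ext) (auto simp: indicator_def)
  show "integrable lebesgue \<rho>" using si unfolding set_integrable_def eq .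
  then show "\<rho> \<in> borel_measurable lebesgue" by auto
qed

lemma si_of_int:
  fixes f :: "'a::euclidean_space \<Rightarrow> real"
  assumes "integrable lebesgue f" "\<forall>x. x\<notin>\<Omega> \<longrightarrow> f x = 0"
  shows "set_integrable lebesgue \<Omega> f"
proof -
  have eq: "(\<lambda>x. indicator \<Omega> x *\<^sub>R f x) = f"
    using assms(2) by (intro ext) (auto simp: indicator_def)
  show ?thesis unfolding set_integrable_def eq by fact
qed

lemma sint_eq_int:
  fixes f :: "'a::euclidean_space \<Rightarrow> real"
  assumes "\<forall>x. x\<notin>\<Omega> \<longrightarrow> f x = 0"
  shows "(LINT x:\<Omega>|lebesgue. f x) = integral\<^sup>L lebesgue f"
proof -
  have eq: "(\<lambda>x. indicator \<Omega> x *\<^sub>R f x) = f"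
    using assms by (intro ext) (auto simp: indicator_def)
  show ?thesis unfolding set_lebesgue_integral_def eq ..
qed

lemma q_int:
  fixes \<rho>0 \<rho>1 :: "'a::euclidean_space \<Rightarrow> real"
  assumes "smooth_pos_density \<Omega> \<rho>0" "smooth_pos_density \<Omega> \<rho>1" "open \<Omega>"
  shows "integrable lebesgue (\<lambda>x. sqrt (\<rho>0 x) * sqrt (\<rho>1 x))"
    "set_integrable lebesgue \<Omega> (\<lambda>x. sqrt (\<rho>0 x) * sqrt (\<rho>1 x))"
proof -
  note d0 = dens[OF assms(1,3)] and d1 = dens[OF assms(2,3)]
  show i: "integrable lebesgue (\<lambda>x. sqrt (\<rho>0 x) * sqrt (\<rho>1 x))"
  proof (rule Bochner_Integration.integrable_bound[of _ "\<lambda>x. \<rho>0 x + \<rho>1 x"])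
    show "integrable lebesgue (\<lambda>x. \<rho>0 x + \<rho>1 x)" using d0 d1 by auto
    show "(\<lambda>x. sqrt (\<rho>0 x) * sqrt (\<rho>1 x)) \<in> borel_measurable lebesgue" using d0 d1 by measurable
    show "AE x in lebesgue. norm (sqrt (\<rho>0 x) * sqrt (\<rho>1 x)) \<le> norm (\<rho>0 x + \<rho>1 x)"
    proof (rule AE_I2)
      fix x
      have a: "0 \<le> \<rho>0 x" "0 \<le> \<rho>1 x" using d0 d1 by auto
      have "sqrt (\<rho>0 x) * sqrt (\<rho>1 x) \<le> (\<rho>0 x + \<rho>1 x)/2"
        using arith_geo_mean_sqrt[OF a] by (simp add: real_sqrt_mult)
      then show "norm (sqrt (\<rho>0 x) * sqrt (\<rho>1 x)) \<le> norm (\<rho>0 x + \<rho>1 x)"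
        using a by simp
    qed
  qed
  show "set_integrable lebesgue \<Omega> (\<lambda>x. sqrt (\<rho>0 x) * sqrt (\<rho>1 x))"
    by (rule si_of_int[OF i]) (use d0 in auto)
qed

lemma trig_id: fixes u v :: real shows "(cos u)^2 + (cos v)^2 - 2 * cos u * cos v * cos (u+v) = (sin (u+v))^2"
proof -
  have "sin u * sin u = 1 - cos u * cos u" "sin v * sin v = 1 - cos v * cos v"
    using sin_squared_eq[of u] sin_squared_eq[of v] by (simp_all add: power2_eq_square)
  then show ?thesis unfolding cos_add sin_add power2_eq_square by algebra
qed

theorem proposition9:
  fixes \<Omega> :: "('a::euclidean_space) set"
    and E :: "('a \<Rightarrow> real) \<Rightarrow> real"
    and dE :: "('a \<Rightarrow> real) \<Rightarrow> 'a \<Rightarrow> real"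
    and \<beta> :: real
    and \<rho>t \<rho>s :: "'a \<Rightarrow> real"
  assumes open_\<Omega>: "open \<Omega>"
    and beta_nonneg: "\<beta> \<ge> 0"
    \<comment> \<open>dE is the L^2 first variation of E\<close>
    and first_variation:
      "\<And>\<rho> h. smooth_pos_density \<Omega> \<rho> \<Longrightarrow> smooth_on \<Omega> h \<Longrightarrow>
         (\<exists>K. compact K \<and> K \<subseteq> \<Omega> \<and> (\<forall>x. x \<notin> K \<longrightarrow> h x = 0)) \<Longrightarrow>
         (LINT x:\<Omega>|lebesgue. h x) = 0 \<Longrightarrow>
         ((\<lambda>eps. E (\<lambda>x. \<rho> x + eps * h x)) has_real_derivative
            (LINT x:\<Omega>|lebesgue. dE \<rho> x * h x)) (at 0)"
    \<comment> \<open>smoothness of E: chain rule along Fisher-Rao geodesics\<close>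
    and smooth_chain:
      "\<And>\<rho>0 \<rho>1 s. smooth_pos_density \<Omega> \<rho>0 \<Longrightarrow> smooth_pos_density \<Omega> \<rho>1 \<Longrightarrow>
         (\<exists>x\<in>\<Omega>. \<rho>0 x \<noteq> \<rho>1 x) \<Longrightarrow> s \<in> {0..1} \<Longrightarrow>
         ((\<lambda>r. E (fr_geodesic \<Omega> \<rho>0 \<rho>1 r)) has_real_derivative
            (LINT x:\<Omega>|lebesgue. dE (fr_geodesic \<Omega> \<rho>0 \<rho>1 s) x * fr_velocity \<Omega> \<rho>0 \<rho>1 s x))
           (at s within {0..1})"
    \<comment> \<open>beta-strong convexity along Fisher-Rao geodesics\<close>
    and strong_convex:
      "\<And>\<rho>0 \<rho>1. smooth_pos_density \<Omega> \<rho>0 \<Longrightarrow> smooth_pos_density \<Omega> \<rho>1 \<Longrightarrow>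
         (\<exists>x\<in>\<Omega>. \<rho>0 x \<noteq> \<rho>1 x) \<Longrightarrow>
         \<exists>E''. \<forall>s\<in>{0..1}.
           ((\<lambda>r. LINT x:\<Omega>|lebesgue. dE (fr_geodesic \<Omega> \<rho>0 \<rho>1 r) x * fr_velocity \<Omega> \<rho>0 \<rho>1 r x)
              has_real_derivative E'' s) (at s within {0..1}) \<and>
           E'' s \<ge> \<beta> * fr_metric \<Omega> (fr_geodesic \<Omega> \<rho>0 \<rho>1 s)
                        (fr_velocity \<Omega> \<rho>0 \<rho>1 s) (fr_velocity \<Omega> \<rho>0 \<rho>1 s)"
    and rho_t: "smooth_pos_density \<Omega> \<rho>t"
    and rho_s: "smooth_pos_density \<Omega> \<rho>s"
    and distinct: "\<exists>x\<in>\<Omega>. \<rho>t x \<noteq> \<rho>s x"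
  shows "let H = arccos (LINT x:\<Omega>|lebesgue. sqrt (\<rho>t x) * sqrt (\<rho>s x));
             T = (\<lambda>x. 2 * H / sin H * (sqrt (\<rho>s x) - sqrt (\<rho>t x) * cos H) / sqrt (\<rho>t x))
         in E \<rho>s \<ge> E \<rho>t
              + (LINT x:\<Omega>|lebesgue. (dE \<rho>t x - (LINT y:\<Omega>|lebesgue. dE \<rho>t y * \<rho>t y)) * T x * \<rho>t x)
              + \<beta> / 2 * (LINT x:\<Omega>|lebesgue. (T x)\<^sup>2 * \<rho>t x)"
proof -
  note dt = dens[OF rho_t open_\<Omega>] and ds = dens[OF rho_s open_\<Omega>]
  have \<Omega>sets: "\<Omega> \<in> sets lebesgue" using open_\<Omega> by simp
  define c where "c = (LINT x:\<Omega>|lebesgue. sqrt (\<rho>t x) * sqrt (\<rho>s x))"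
  define H where "H = arccos c"
  define T where "T = (\<lambda>x. 2 * H / sin H * (sqrt (\<rho>s x) - sqrt (\<rho>t x) * cos H) / sqrt (\<rho>t x))"
  have qi: "set_integrable lebesgue \<Omega> (\<lambda>x. sqrt (\<rho>t x) * sqrt (\<rho>s x))"
    using q_int[OF rho_t rho_s open_\<Omega>] by auto
  have lini: "set_integrable lebesgue \<Omega> (\<lambda>x. a * \<rho>t x + b * (sqrt (\<rho>t x) * sqrt (\<rho>s x)) + d * \<rho>s x)"
    for a b d
    using dt(3) ds(3) qi by (intro set_integral_add set_integrable_mult_right) auto
  have lin: "(LINT x:\<Omega>|lebesgue. a * \<rho>t x + b * (sqrt (\<rho>t x) * sqrt (\<rho>s x)) + d * \<rho>s x) = a + b * c + d"
    for a b d
  proof -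
    have "(LINT x:\<Omega>|lebesgue. a * \<rho>t x + b * (sqrt (\<rho>t x) * sqrt (\<rho>s x)) + d * \<rho>s x)
      = (LINT x:\<Omega>|lebesgue. a * \<rho>t x + b * (sqrt (\<rho>t x) * sqrt (\<rho>s x))) + (LINT x:\<Omega>|lebesgue. d * \<rho>s x)"
      using dt(3) ds(3) qi by (intro set_integral_add set_integrable_mult_right) auto
    also have "(LINT x:\<Omega>|lebesgue. a * \<rho>t x + b * (sqrt (\<rho>t x) * sqrt (\<rho>s x)))
      = (LINT x:\<Omega>|lebesgue. a * \<rho>t x) + (LINT x:\<Omega>|lebesgue. b * (sqrt (\<rho>t x) * sqrt (\<rho>s x)))"
      using dt(3) ds(3) qi by (intro set_integral_add set_integrable_mult_right) auto
    finally show ?thesis using dt(4) ds(4) by (simp add: c_def)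
  qed
  have c0: "0 \<le> c"
  proof -
    have "(LINT x:\<Omega>|lebesgue. (0::real)) \<le> c"
      unfolding c_def using qi dt(1) ds(1) by (intro set_integral_mono) auto
    then show ?thesis by simp
  qed
  define D where "D x = (sqrt (\<rho>t x) - sqrt (\<rho>s x))\<^sup>2" for x
  have Deq: "D x = 1 * \<rho>t x + (-2) * (sqrt (\<rho>t x) * sqrt (\<rho>s x)) + 1 * \<rho>s x" for x
    using dt(1) ds(1) unfolding D_def by (simp add: power2_diff real_sqrt_pow2)
  have ID: "(LINT x:\<Omega>|lebesgue. D x) = 2 - 2 * c"
    unfolding Deq lin by simp
  have IDi: "set_integrable lebesgue \<Omega> D"
    unfolding Deq by (rule lini)
  have Dpos: "(LINT x:\<Omega>|lebesgue. D x) > 0"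
  proof -
    obtain x0 where x0: "x0 \<in> \<Omega>" "\<rho>t x0 \<noteq> \<rho>s x0" using distinct by auto
    have "sqrt (\<rho>t x0) \<noteq> sqrt (\<rho>s x0)" using x0 dt(1) ds(1) by auto
    then have Dx0: "D x0 > 0" unfolding D_def by simp
    have "continuous_on \<Omega> D" unfolding D_def
      using dt(2) ds(2) by (intro continuous_intros)
    then have "isCont D x0" using continuous_on_eq_continuous_at[OF open_\<Omega>] x0 by auto
    then obtain \<delta> where \<delta>: "\<delta> > 0" "\<And>y. dist y x0 < \<delta> \<Longrightarrow> dist (D y) (D x0) < D x0 / 2"
      unfolding continuous_at_eps_delta using Dx0 by (meson half_gt_zero)
    obtain r where r: "r > 0" "ball x0 r \<subseteq> \<Omega>" using open_\<Omega> x0 open_contains_ball by blast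
    define e where "e = min \<delta> r"
    have e: "e > 0" "ball x0 e \<subseteq> \<Omega>" using \<delta> r unfolding e_def by auto
    have De: "D y \<ge> D x0 / 2" if "y \<in> ball x0 e" for y
    proof -
      have "dist y x0 < \<delta>" using that unfolding e_def by (auto simp: dist_commute)
      then have "\<bar>D y - D x0\<bar> < D x0 / 2" using \<delta>(2) by (simp add: dist_real_def)
      then show ?thesis by arith
    qed
    have ii: "integrable lebesgue (indicat_real (ball x0 e))"
      using emeasure_lborel_ball_finite[of x0 e] by (intro integrable_real_indicator) auto
    have ind_eq: "(\<lambda>x. indicator \<Omega> x *\<^sub>R (indicator (ball x0 e) x * (D x0 / 2))) =
        (\<lambda>x. indicator (ball x0 e) x * (D x0 / 2))"
      using e(2) by (intro ext) (auto simp: indicator_def)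
    have si: "set_integrable lebesgue \<Omega> (\<lambda>x. indicator (ball x0 e) x * (D x0 / 2))"
      unfolding set_integrable_def ind_eq using ii by auto
    have "(LINT x:\<Omega>|lebesgue. indicator (ball x0 e) x * (D x0 / 2)) = measure lborel (ball x0 e) * (D x0 / 2)"
      unfolding set_lebesgue_integral_def ind_eq
      by (simp add: integral_indicator measure_completion)
    also have "\<dots> > 0" using content_ball_pos[OF e(1)] Dx0 by simp
    also have "(LINT x:\<Omega>|lebesgue. indicator (ball x0 e) x * (D x0 / 2)) \<le> (LINT x:\<Omega>|lebesgue. D x)"
      using si IDi
    proof (rule set_integral_mono)
      fix x assume "x \<in> \<Omega>"
      show "indicator (ball x0 e) x * (D x0 / 2) \<le> D x"
        using De[of x] unfolding D_def by (auto simp: indicator_def)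
    qed
    finally show ?thesis .
  qed
  have c1: "c < 1" using Dpos ID by simp
  have cosH: "cos H = c" unfolding H_def using c0 c1 by (simp add: cos_arccos)
  have Hb: "0 < H" "H < pi" unfolding H_def using arccos_lt_bounded[of c] c0 c1 by auto
  have sinH: "sin H > 0" using Hb by (simp add: sin_gt_zero)
  have sin2: "(sin H)\<^sup>2 = 1 - c\<^sup>2" using sin_squared_eq[of H] cosH by simp
  have angle: "fr_angle \<Omega> \<rho>t \<rho>s = H" unfolding fr_angle_def H_def c_def ..
  have sqt: "sqrt (\<rho>t x) ^ 2 = \<rho>t x" for x using dt(1) by simp
  have sqs: "sqrt (\<rho>s x) ^ 2 = \<rho>s x" for x using ds(1) by simp
  have G0: "fr_geodesic \<Omega> \<rho>t \<rho>s 0 = \<rho>t"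
    using sinH by (intro ext) (simp add: fr_geodesic_def fr_root_def angle sqt)
  have G1: "fr_geodesic \<Omega> \<rho>t \<rho>s 1 = \<rho>s"
    using sinH by (intro ext) (simp add: fr_geodesic_def fr_root_def angle sqs)
  have V0: "fr_velocity \<Omega> \<rho>t \<rho>s 0 x = T x * \<rho>t x" if "x \<in> \<Omega>" for x
  proof -
    define u where "u = sqrt (\<rho>t x)"
    have p: "u > 0" using dt(7) that unfolding u_def by simp
    have ru: "\<rho>t x = u^2" unfolding u_def using sqt by simp
    show ?thesis using sinH p unfolding fr_velocity_def fr_root_def fr_root_dot_def angle T_def Let_def u_def[symmetric] ru
      by (simp add: field_simps power2_eq_square)
  qed
  have Trho: "T x * \<rho>t x = (- 2 * H / sin H * cos H) * \<rho>t x + (2 * H / sin H) * (sqrt (\<rho>t x) * sqrt (\<rho>s x)) + 0 * \<rho>s x"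
    if "x \<in> \<Omega>" for x
  proof -
    define u where "u = sqrt (\<rho>t x)"
    have p: "u > 0" using dt(7) that unfolding u_def by simp
    have ru: "\<rho>t x = u^2" unfolding u_def using sqt by simp
    show ?thesis using sinH p unfolding T_def u_def[symmetric] ru
      by (simp add: field_simps power2_eq_square)
  qed
  have ITrho: "(LINT x:\<Omega>|lebesgue. T x * \<rho>t x) = 0"
    and ITrhoi: "set_integrable lebesgue \<Omega> (\<lambda>x. T x * \<rho>t x)"
  proof -
    have "(LINT x:\<Omega>|lebesgue. T x * \<rho>t x) = (LINT x:\<Omega>|lebesgue. (- 2 * H / sin H * cos H) * \<rho>t x + (2 * H / sin H) * (sqrt (\<rho>t x) * sqrt (\<rho>s x)) + 0 * \<rho>s x)"
      using Trho \<Omega>sets by (intro set_lebesgue_integral_cong) auto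
    also have "\<dots> = 0" unfolding lin cosH by (simp add: field_simps)
    finally show "(LINT x:\<Omega>|lebesgue. T x * \<rho>t x) = 0" .
    show "set_integrable lebesgue \<Omega> (\<lambda>x. T x * \<rho>t x)"
      by (rule set_integrable_cong[THEN iffD2, OF refl refl _ lini[of "- 2 * H / sin H * cos H" "2 * H / sin H" 0]]) (use Trho in auto)
  qed
  have IT2: "(LINT x:\<Omega>|lebesgue. (T x)\<^sup>2 * \<rho>t x) = 4 * H\<^sup>2"
  proof -
    have eq: "(T x)\<^sup>2 * \<rho>t x = ((2 * H / sin H)\<^sup>2 * (cos H)\<^sup>2) * \<rho>t x + (- 2 * (2 * H / sin H)\<^sup>2 * cos H) * (sqrt (\<rho>t x) * sqrt (\<rho>s x)) + (2 * H / sin H)\<^sup>2 * \<rho>s x"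
      if "x \<in> \<Omega>" for x
    proof -
      define u where "u = sqrt (\<rho>t x)"
      define w where "w = sqrt (\<rho>s x)"
      have p: "u > 0" using dt(7) that unfolding u_def by simp
      have ru: "\<rho>t x = u^2" unfolding u_def using sqt by simp
      have rw: "\<rho>s x = w^2" unfolding w_def using sqs by simp
      show ?thesis using sinH p unfolding T_def u_def[symmetric] w_def[symmetric] ru rw
        by (simp add: field_simps power2_eq_square)
    qed
    have "(LINT x:\<Omega>|lebesgue. (T x)\<^sup>2 * \<rho>t x) = (LINT x:\<Omega>|lebesgue. ((2 * H / sin H)\<^sup>2 * (cos H)\<^sup>2) * \<rho>t x + (- 2 * (2 * H / sin H)\<^sup>2 * cos H) * (sqrt (\<rho>t x) * sqrt (\<rho>s x)) + (2 * H / sin H)\<^sup>2 * \<rho>s x)"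
      using eq \<Omega>sets by (intro set_lebesgue_integral_cong) auto
    also have "\<dots> = (2 * H / sin H)\<^sup>2 * (1 - c\<^sup>2)" unfolding lin cosH using sinH by (simp add: field_simps power2_eq_square)
    also have "\<dots> = 4 * H\<^sup>2" using sinH unfolding sin2[symmetric] by (simp add: field_simps)
    finally show ?thesis .
  qed
  have Ms: "fr_metric \<Omega> (fr_geodesic \<Omega> \<rho>t \<rho>s s) (fr_velocity \<Omega> \<rho>t \<rho>s s) (fr_velocity \<Omega> \<rho>t \<rho>s s) = 4 * H\<^sup>2"
    if s: "s \<in> {0..1}" for s
  proof -
    define a where "a = cos ((1 - s) * H)"
    define b where "b = cos (s * H)"
    define k where "k = (H / sin H)\<^sup>2"
    have pt: "fr_velocity \<Omega> \<rho>t \<rho>s s x * fr_velocity \<Omega> \<rho>t \<rho>s s x / fr_geodesic \<Omega> \<rho>t \<rho>s s x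
        = (4 * k * a\<^sup>2) * \<rho>t x + (- 8 * k * a * b) * (sqrt (\<rho>t x) * sqrt (\<rho>s x)) + (4 * k * b\<^sup>2) * \<rho>s x"
      if x: "x \<in> \<Omega>" for x
    proof -
      define u where "u = sqrt (\<rho>t x)"
      define w where "w = sqrt (\<rho>s x)"
      have pu: "u > 0" using dt(7) x unfolding u_def by simp
      have pw: "w > 0" using ds(7) x unfolding w_def by simp
      have ru: "\<rho>t x = u^2" unfolding u_def using sqt by simp
      have rw: "\<rho>s x = w^2" unfolding w_def using sqs by simp
      have s1: "0 \<le> sin ((1 - s) * H)" using s Hb by (intro sin_ge_zero) (auto simp: mult_le_cancel_right1 less_imp_le intro: order_trans[of _ H])
      have s2: "0 \<le> sin (s * H)" using s Hb by (intro sin_ge_zero) (auto simp: mult_le_cancel_right1 less_imp_le intro: order_trans[of _ H])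
      have num: "sin ((1 - s) * H) * u + sin (s * H) * w > 0"
      proof (cases "s < 1")
        case True
        have "(1 - s) * H > 0" using True Hb by simp
        moreover have "(1 - s) * H < pi" using s Hb
          by (smt (verit, best) mult_left_le_one_le atLeastAtMost_iff)
        ultimately have "sin ((1 - s) * H) > 0" by (simp add: sin_gt_zero)
        then show ?thesis using pu pw s2 by (simp add: add_pos_nonneg)
      next
        case False
        then have "s = 1" using s by simp
        then show ?thesis using sinH pu pw by simp
      qed
      have R: "fr_root \<Omega> \<rho>t \<rho>s s x \<noteq> 0"
        unfolding fr_root_def angle Let_def u_def[symmetric] w_def[symmetric] using num sinH by simp
      have "fr_velocity \<Omega> \<rho>t \<rho>s s x * fr_velocity \<Omega> \<rho>t \<rho>s s x / fr_geodesic \<Omega> \<rho>t \<rho>s s x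
          = 4 * (fr_root_dot \<Omega> \<rho>t \<rho>s s x)\<^sup>2"
        using R unfolding fr_velocity_def fr_geodesic_def by (simp add: field_simps power2_eq_square)
      also have "\<dots> = (4 * k * a\<^sup>2) * \<rho>t x + (- 8 * k * a * b) * (sqrt (\<rho>t x) * sqrt (\<rho>s x)) + (4 * k * b\<^sup>2) * \<rho>s x"
        unfolding fr_root_dot_def angle Let_def u_def[symmetric] w_def[symmetric] ru rw a_def[symmetric] b_def[symmetric] k_def
        using sinH by (simp add: field_simps power2_eq_square)
      finally show ?thesis .
    qed
    have "fr_metric \<Omega> (fr_geodesic \<Omega> \<rho>t \<rho>s s) (fr_velocity \<Omega> \<rho>t \<rho>s s) (fr_velocity \<Omega> \<rho>t \<rho>s s)
        = (LINT x:\<Omega>|lebesgue. (4 * k * a\<^sup>2) * \<rho>t x + (- 8 * k * a * b) * (sqrt (\<rho>t x) * sqrt (\<rho>s x)) + (4 * k * b\<^sup>2) * \<rho>s x)"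
      unfolding fr_metric_def using pt \<Omega>sets by (intro set_lebesgue_integral_cong) auto
    also have "\<dots> = 4 * k * (a\<^sup>2 + b\<^sup>2 - 2 * a * b * cos ((1 - s) * H + s * H))"
      unfolding lin by (simp add: cosH algebra_simps)
    also have "\<dots> = 4 * k * (sin H)\<^sup>2" unfolding a_def b_def trig_id by (simp add: algebra_simps)
    also have "\<dots> = 4 * H\<^sup>2" unfolding k_def using sinH by (simp add: field_simps)
    finally show ?thesis .
  qed
  define f where "f = (\<lambda>r. E (fr_geodesic \<Omega> \<rho>t \<rho>s r))"
  define g where "g = (\<lambda>r. LINT x:\<Omega>|lebesgue. dE (fr_geodesic \<Omega> \<rho>t \<rho>s r) x * fr_velocity \<Omega> \<rho>t \<rho>s r x)"
  define K where "K = \<beta> * (4 * H\<^sup>2)"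
  have hf: "(f has_real_derivative g s) (at s within {0..1})" if "s \<in> {0..1}" for s
    unfolding f_def g_def using smooth_chain[OF rho_t rho_s distinct that] .
  obtain E'' where hE: "\<forall>s\<in>{0..1}. (g has_real_derivative E'' s) (at s within {0..1}) \<and>
           E'' s \<ge> \<beta> * fr_metric \<Omega> (fr_geodesic \<Omega> \<rho>t \<rho>s s)
                        (fr_velocity \<Omega> \<rho>t \<rho>s s) (fr_velocity \<Omega> \<rho>t \<rho>s s)"
    using strong_convex[OF rho_t rho_s distinct] unfolding g_def by blast
  have hg: "(g has_real_derivative E'' s) (at s within {0..1})" "E'' s \<ge> K" if "s \<in> {0..1}" for s
    using hE that Ms[OF that] unfolding K_def by force+
  have gcont: "continuous_on {0..1} g" using hg(1) by (intro DERIV_continuous_on) auto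
  have fcont: "continuous_on {0..1} f" using hf by (intro DERIV_continuous_on) auto
  have psi: "g 0 + K * s \<le> g s" if s: "s \<in> {0..1}" for s
  proof -
    have "g 0 - K * 0 \<le> g s - K * s"
    proof (rule DERIV_nonneg_imp_increasing_open[where f="\<lambda>r. g r - K * r"])
      show "0 \<le> s" using s by simp
      fix x assume x: "0 < x" "x < s"
      then have x1: "x \<in> {0..1}" "0 < x" "x < 1" using s by auto
      have "(g has_real_derivative E'' x) (at x)"
        using hg(1)[OF x1(1)] at_within_Icc_at[OF x1(2,3)] by simp
      then have "((\<lambda>r. g r - K * r) has_real_derivative E'' x - K * 1) (at x)"
        by (auto intro!: derivative_eq_intros)
      then show "\<exists>y. ((\<lambda>r. g r - K * r) has_real_derivative y) (at x) \<and> 0 \<le> y"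
        using hg(2)[OF x1(1)] by auto
    next
      show "continuous_on {0..s} (\<lambda>r. g r - K * r)"
        using s by (intro continuous_intros continuous_on_subset[OF gcont]) auto
    qed
    then show ?thesis by simp
  qed
  have phi: "f 0 \<le> f 1 - g 0 - K / 2"
  proof -
    have "f 0 - g 0 * 0 - K / 2 * 0\<^sup>2 \<le> f 1 - g 0 * 1 - K / 2 * 1\<^sup>2"
    proof (rule DERIV_nonneg_imp_increasing_open[where f="\<lambda>r. f r - g 0 * r - K / 2 * r\<^sup>2"])
      show "(0::real) \<le> 1" by simp
      fix x :: real assume x: "0 < x" "x < 1"
      then have x1: "x \<in> {0..1}" by auto
      have "(f has_real_derivative g x) (at x)"
        using hf[OF x1] at_within_Icc_at[OF x] by simp
      then have "((\<lambda>r. f r - g 0 * r - K / 2 * r\<^sup>2) has_real_derivative g x - g 0 * 1 - K / 2 * (2 * x)) (at x)"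
        by (auto intro!: derivative_eq_intros)
      then show "\<exists>y. ((\<lambda>r. f r - g 0 * r - K / 2 * r\<^sup>2) has_real_derivative y) (at x) \<and> 0 \<le> y"
        using psi[OF x1] by (intro exI[of _ "g x - g 0 * 1 - K / 2 * (2 * x)"]) auto
    next
      show "continuous_on {0..1} (\<lambda>r. f r - g 0 * r - K / 2 * r\<^sup>2)"
        by (intro continuous_intros fcont)
    qed
    then show ?thesis by simp
  qed
  have f0: "f 0 = E \<rho>t" unfolding f_def G0 ..
  have f1: "f 1 = E \<rho>s" unfolding f_def G1 ..
  have g0: "g 0 = (LINT x:\<Omega>|lebesgue. dE \<rho>t x * (T x * \<rho>t x))"
    unfolding g_def G0 using V0 \<Omega>sets by (intro set_lebesgue_integral_cong) auto
  define C where "C = (LINT y:\<Omega>|lebesgue. dE \<rho>t y * \<rho>t y)"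
  have ptw: "(dE \<rho>t x - C) * T x * \<rho>t x = dE \<rho>t x * (T x * \<rho>t x) - C * (T x * \<rho>t x)" for x
    by (simp add: algebra_simps)
  have Ieq: "(LINT x:\<Omega>|lebesgue. (dE \<rho>t x - C) * T x * \<rho>t x) = g 0"
  proof (cases "set_integrable lebesgue \<Omega> (\<lambda>x. dE \<rho>t x * (T x * \<rho>t x))")
    case True
    have "(LINT x:\<Omega>|lebesgue. (dE \<rho>t x - C) * T x * \<rho>t x)
        = (LINT x:\<Omega>|lebesgue. dE \<rho>t x * (T x * \<rho>t x)) - (LINT x:\<Omega>|lebesgue. C * (T x * \<rho>t x))"
      unfolding ptw using True ITrhoi by (intro set_integral_diff) auto
    then show ?thesis using ITrho g0 by simp
  next
    case False
    have nF: "\<not> set_integrable lebesgue \<Omega> (\<lambda>x. (dE \<rho>t x - C) * T x * \<rho>t x)"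
    proof
      assume a: "set_integrable lebesgue \<Omega> (\<lambda>x. (dE \<rho>t x - C) * T x * \<rho>t x)"
      have "set_integrable lebesgue \<Omega> (\<lambda>x. (dE \<rho>t x - C) * T x * \<rho>t x + C * (T x * \<rho>t x))"
        using a ITrhoi by (intro set_integral_add) auto
      moreover have "(\<lambda>x. (dE \<rho>t x - C) * T x * \<rho>t x + C * (T x * \<rho>t x)) = (\<lambda>x. dE \<rho>t x * (T x * \<rho>t x))"
        by (intro ext) (simp add: algebra_simps)
      ultimately show False using False by simp
    qed
    have "(LINT x:\<Omega>|lebesgue. (dE \<rho>t x - C) * T x * \<rho>t x) = 0"
      using nF unfolding set_integrable_def set_lebesgue_integral_def by (rule not_integrable_integral_eq)
    moreover have "g 0 = 0"
      using False unfolding g0 set_integrable_def set_lebesgue_integral_def by (rule not_integrable_integral_eq)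
    ultimately show ?thesis by simp
  qed
  have main: "E \<rho>s \<ge> E \<rho>t
              + (LINT x:\<Omega>|lebesgue. (dE \<rho>t x - C) * T x * \<rho>t x)
              + \<beta> / 2 * (LINT x:\<Omega>|lebesgue. (T x)\<^sup>2 * \<rho>t x)"
    using phi unfolding Ieq IT2 f0 f1 K_def by simp
  show ?thesis using main unfolding Let_def T_def H_def c_def C_def .
qed

end
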